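(* Let $M$ be a $\lambda$-term, $V$ a value and $x$ a variable. Then $$\mathcal T(M\{x:=V\})=\bigcup_{t\in\mathcal T(M)}\ \bigcup_{[v_1,\dots,v_n]\in\mathcal T(V)} t\langle x:=v_1,\dots,v_n\rangle.$$
   Context: $\lambda$-terms and values are $M::=V\mid MN$, $V::=x\mid\lambda x.M$, up to $\alpha$-conversion; $M\{x:=V\}$ is capture-avoiding substitution. Resource calculus: resource values $v::=x\mid\lambda x.t$; simple terms $s,t::=st\mid[v_1,\dots,v_k]$ ($k\ge0$, bags are finite multisets); $[x^n]$ is $n$ copies of $x$. Linear substitution: if $x$ has exactly $n$ free occurrences in $e$, enumerated $x_1,\dots,x_n$, then $e\langle x:=v_1,\dots,v_n\rangle=\{e[x_1:=v_{\pi(1)},\dots,x_n:=v_{\pi(n)}]\mid\pi\text{ a permutation of }\{1,\dots,n\}\}$ (replacing the $i$-th occurrence by $v_{\pi(i)}$); otherwise it is $\emptyset$. Taylor expansion: $\mathcal T(x)=\{[x^n]\mid n\ge0\}$, $\mathcal T(\lambda x.N)=\{[\lambda x.t_1,\dots,\lambda x.t_n]\mid n\ge0,\ t_i\in\mathcal T(N)\}$, $\mathcal T(PQ)=\{st\mid s\in\mathcal T(P),t\in\mathcal T(Q)\}$. *)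

theory Defs
  imports "HOL-Library.Multiset"
begin

text \<open>Lambda-terms up to alpha-conversion, represented with de Bruijn indices.
  A free variable named x :: nat is represented under d binders by the index x + d.\<close>

datatype lterm = LVar nat | LAbs lterm | LApp lterm lterm

fun is_value :: "lterm \<Rightarrow> bool" where
  "is_value (LVar _) = True"
| "is_value (LAbs _) = True"
| "is_value (LApp _ _) = False"

fun llift :: "nat \<Rightarrow> lterm \<Rightarrow> lterm" where
  "llift k (LVar i) = LVar (if i < k then i else Suc i)"
| "llift k (LAbs M) = LAbs (llift (Suc k) M)"
| "llift k (LApp M N) = LApp (llift k M) (llift k N)"

fun lsubst :: "lterm \<Rightarrow> nat \<Rightarrow> lterm \<Rightarrow> lterm" where
  "lsubst (LVar y) x V = (if y = x then V else LVar y)"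
| "lsubst (LAbs M) x V = LAbs (lsubst M (Suc x) (llift 0 V))"
| "lsubst (LApp M N) x V = LApp (lsubst M x V) (lsubst N x V)"

datatype rval = RVar nat | RAbs sterm
     and sterm = SApp sterm sterm | Bag "rval multiset"

primrec rlift :: "nat \<Rightarrow> rval \<Rightarrow> rval" and slift :: "nat \<Rightarrow> sterm \<Rightarrow> sterm" where
  "rlift k (RVar i) = RVar (if i < k then i else Suc i)"
| "rlift k (RAbs t) = RAbs (slift (Suc k) t)"
| "slift k (SApp s t) = SApp (slift k s) (slift k t)"
| "slift k (Bag B) = Bag (image_mset (rlift k) B)"

text \<open>Linear substitution: lsubs x B e e' holds iff e' is obtained from e by replacing
  each free occurrence of x by exactly one element of the bag B, using every element of B
  exactly once (i.e. the i-th occurrence by v_{pi(i)} for a permutation pi).\<close>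
inductive lsubv :: "nat \<Rightarrow> rval multiset \<Rightarrow> rval \<Rightarrow> rval \<Rightarrow> bool"
  and lsubs :: "nat \<Rightarrow> rval multiset \<Rightarrow> sterm \<Rightarrow> sterm \<Rightarrow> bool" where
  lsv_hit: "lsubv x {#w#} (RVar x) w"
| lsv_other: "y \<noteq> x \<Longrightarrow> lsubv x {#} (RVar y) (RVar y)"
| lsv_abs: "lsubs (Suc x) (image_mset (rlift 0) B) t t' \<Longrightarrow> lsubv x B (RAbs t) (RAbs t')"
| lss_app: "lsubs x B1 s s' \<Longrightarrow> lsubs x B2 t t' \<Longrightarrow> lsubs x (B1 + B2) (SApp s t) (SApp s' t')"
| lss_nil: "lsubs x {#} (Bag {#}) (Bag {#})"
| lss_cons: "lsubv x B1 v v' \<Longrightarrow> lsubs x B2 (Bag vs) (Bag ws) \<Longrightarrow>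
     lsubs x (B1 + B2) (Bag (add_mset v vs)) (Bag (add_mset v' ws))"

definition linsubst :: "sterm \<Rightarrow> nat \<Rightarrow> rval multiset \<Rightarrow> sterm set" where
  "linsubst e x B = {e'. lsubs x B e e'}"

fun taylor :: "lterm \<Rightarrow> sterm set" where
  "taylor (LVar x) = {Bag (replicate_mset n (RVar x)) | n. True}"
| "taylor (LAbs N) = {Bag (mset (map RAbs ts)) | ts. set ts \<subseteq> taylor N}"
| "taylor (LApp P Q) = {SApp s t | s t. s \<in> taylor P \<and> t \<in> taylor Q}"

end

theory Submission
  imports Defs
begin

lemma taylor_var_iff: "Bag B \<in> taylor (LVar y) \<longleftrightarrow> (\<forall>v\<in>#B. v = RVar y)"
proof
  assume "Bag B \<in> taylor (LVar y)" then show "\<forall>v\<in>#B. v = RVar y" by (auto split: if_splits)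
next
  assume "\<forall>v\<in>#B. v = RVar y"
  then have "\<exists>n. B = replicate_mset n (RVar y)"
  proof (induction B)
    case empty then show ?case by (intro exI[of _ 0]) simp
  next
    case (add a B)
    then obtain n where "B = replicate_mset n (RVar y)" by auto
    then show ?case using add.prems by (intro exI[of _ "Suc n"]) simp
  qed
  then show "Bag B \<in> taylor (LVar y)" by auto
qed

lemma taylor_abs_iff: "Bag B \<in> taylor (LAbs N) \<longleftrightarrow> (\<forall>v\<in>#B. \<exists>t\<in>taylor N. v = RAbs t)"
proof
  assume "Bag B \<in> taylor (LAbs N)" then show "\<forall>v\<in>#B. \<exists>t\<in>taylor N. v = RAbs t" by fastforce
next
  assume a: "\<forall>v\<in>#B. \<exists>t\<in>taylor N. v = RAbs t"
  obtain xs where xs: "B = mset xs" by (metis ex_mset)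
  define ts where "ts = map (\<lambda>v. case v of RAbs t \<Rightarrow> t | RVar _ \<Rightarrow> undefined) xs"
  have "map RAbs ts = xs" using a unfolding ts_def xs
    by (induction xs) auto
  moreover have "set ts \<subseteq> taylor N" using a unfolding ts_def xs by auto
  ultimately show "Bag B \<in> taylor (LAbs N)" using xs by auto
qed

lemma taylor_value_bag: "is_value V \<Longrightarrow> s \<in> taylor V \<Longrightarrow> \<exists>B. s = Bag B"
  by (cases V) auto

lemma taylor_value_empty: "is_value V \<Longrightarrow> Bag {#} \<in> taylor V"
  by (cases V) (auto simp: taylor_var_iff taylor_abs_iff simp del: taylor.simps)

lemma taylor_value_plus: "is_value V \<Longrightarrow>
   Bag (B1 + B2) \<in> taylor V \<longleftrightarrow> Bag B1 \<in> taylor V \<and> Bag B2 \<in> taylor V"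
  by (cases V) (auto simp: taylor_var_iff taylor_abs_iff simp del: taylor.simps)

lemma taylor_llift: "taylor (llift k M) = slift k ` taylor M"
proof (induction M arbitrary: k)
  case (LVar i) then show ?case by (auto simp: image_iff) (metis image_replicate_mset rlift.simps(1) slift.simps(2))+
next
  case (LAbs N)
  show ?case
  proof (rule set_eqI)
    fix s
    have "s \<in> taylor (llift k (LAbs N)) \<longleftrightarrow> (\<exists>ts. s = Bag (mset (map RAbs ts)) \<and> ts \<in> lists (slift (Suc k) ` taylor N))"
      using LAbs by auto
    also have "\<dots> \<longleftrightarrow> (\<exists>ts. s = Bag (mset (map RAbs ts)) \<and> ts \<in> map (slift (Suc k)) ` lists (taylor N))"
      by (simp only: lists_image)
    also have "\<dots> \<longleftrightarrow> s \<in> slift k ` taylor (LAbs N)"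
    proof -
      have e: "\<And>ts0. slift k (Bag (mset (map RAbs ts0))) = Bag (mset (map RAbs (map (slift (Suc k)) ts0)))"
        subgoal for ts0 by (induction ts0) auto done
      have "s \<in> slift k ` taylor (LAbs N) \<longleftrightarrow> (\<exists>ts0\<in>lists (taylor N). s = slift k (Bag (mset (map RAbs ts0))))"
        by (auto simp del: slift.simps)
      then show ?thesis unfolding e by blast
    qed
    finally show "s \<in> taylor (llift k (LAbs N)) \<longleftrightarrow> s \<in> slift k ` taylor (LAbs N)" .
  qed
next
  case (LApp P Q) then show ?case by (auto simp: image_def) (metis slift.simps(1))
qed

lemma value_llift: "is_value V \<Longrightarrow> is_value (llift k V)"
  by (cases V) auto

lemma bag_llift_iff: "Bag B' \<in> taylor (llift 0 V) \<longleftrightarrow> (\<exists>B. B' = image_mset (rlift 0) B \<and> Bag B \<in> taylor V)"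
proof -
  have "Bag B' \<in> slift 0 ` taylor V \<longleftrightarrow> (\<exists>B. B' = image_mset (rlift 0) B \<and> Bag B \<in> taylor V)"
  proof
    assume "Bag B' \<in> slift 0 ` taylor V"
    then obtain s where "s \<in> taylor V" "Bag B' = slift 0 s" by auto
    then show "\<exists>B. B' = image_mset (rlift 0) B \<and> Bag B \<in> taylor V" by (cases s) auto
  qed force
  then show ?thesis by (simp add: taylor_llift)
qed


lemma lsubs_nil_inv: "lsubs x B (Bag {#}) e \<Longrightarrow> B = {#} \<and> e = Bag {#}"
  by (erule lsubs.cases) auto

lemma lsubs_cons_inv:
  "lsubs x B (Bag (add_mset v vs)) e \<Longrightarrow>
   \<exists>B1 B2 v' ws. B = B1 + B2 \<and> lsubv x B1 v v' \<and> lsubs x B2 (Bag vs) (Bag ws) \<and> e = Bag (add_mset v' ws)"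
proof (induction "size vs" arbitrary: v vs B e rule: less_induct)
  case less
  from less.prems show ?case
  proof (cases rule: lsubs.cases)
    case (lss_cons B1 v0 v0' B2 vs0 ws0)
    show ?thesis
    proof (cases "v = v0")
      case True
      then have "vs = vs0" using lss_cons by simp
      then show ?thesis using lss_cons True by blast
    next
      case False
      then have "v \<in># vs0" using lss_cons
        by (metis insert_noteq_member)
      then obtain vs1 where vs0: "vs0 = add_mset v vs1" by (metis multi_member_split)
      have vs: "vs = add_mset v0 vs1" using lss_cons vs0 False
        by (metis add_mset_commute add_mset_remove_trivial)
      have "size vs1 < size vs" using vs by simp
      moreover have "lsubs x B2 (Bag (add_mset v vs1)) (Bag ws0)" using lss_cons vs0 by simp
      ultimately have "\<exists>B1 B2a v' ws. B2 = B1 + B2a \<and> lsubv x B1 v v' \<and> lsubs x B2a (Bag vs1) (Bag ws) \<and> Bag ws0 = Bag (add_mset v' ws)"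
        by (rule less.hyps)
      then obtain C1 C2 v' ws1 where C: "B2 = C1 + C2" "lsubv x C1 v v'"
        "lsubs x C2 (Bag vs1) (Bag ws1)" "Bag ws0 = Bag (add_mset v' ws1)"
        by blast
      have "lsubs x (B1 + C2) (Bag (add_mset v0 vs1)) (Bag (add_mset v0' ws1))"
        by (rule lsubv_lsubs.lss_cons[OF _ C(3)]) (use lss_cons in auto)
      moreover have "B = C1 + (B1 + C2)" using lss_cons C by (simp add: ac_simps)
      moreover have "e = Bag (add_mset v' (add_mset v0' ws1))" using lss_cons C
        by (simp add: add_mset_commute)
      ultimately show ?thesis using C(2) vs by blast
    qed
  qed auto
qed

lemma lsubs_rep_inv:
  "lsubs x B (Bag (replicate_mset n (RVar y))) s \<Longrightarrow>
   (if y = x then s = Bag B \<and> size B = n else B = {#} \<and> s = Bag (replicate_mset n (RVar y)))"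
proof (induction n arbitrary: B s)
  case 0 then show ?case using lsubs_nil_inv by auto
next
  case (Suc n)
  from lsubs_cons_inv[of x B "RVar y" "replicate_mset n (RVar y)" s] Suc.prems
  obtain B1 B2 v' ws where b: "B = B1 + B2" "lsubv x B1 (RVar y) v'"
    "lsubs x B2 (Bag (replicate_mset n (RVar y))) (Bag ws)" "s = Bag (add_mset v' ws)" by auto
  from b(2) have "(y = x \<and> B1 = {#v'#}) \<or> (y \<noteq> x \<and> B1 = {#} \<and> v' = RVar y)"
    by (cases rule: lsubv.cases) auto
  then show ?case using Suc.IH[OF b(3)] b by (auto split: if_splits)
qed

lemma lsubs_rep_hit: "lsubs x B (Bag (replicate_mset (size B) (RVar x))) (Bag B)"
proof (induction B)
  case empty then show ?case by (simp add: lss_nil)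
next
  case (add w B)
  have "lsubs x ({#w#} + B) (Bag (add_mset (RVar x) (replicate_mset (size B) (RVar x)))) (Bag (add_mset w B))"
    using lsv_hit add by (rule lss_cons)
  then show ?case by simp
qed

lemma lsubs_rep_other: "y \<noteq> x \<Longrightarrow> lsubs x {#} (Bag (replicate_mset n (RVar y))) (Bag (replicate_mset n (RVar y)))"
proof (induction n)
  case 0 then show ?case by (simp add: lss_nil)
next
  case (Suc n)
  have "lsubs x ({#} + {#}) (Bag (add_mset (RVar y) (replicate_mset n (RVar y)))) (Bag (add_mset (RVar y) (replicate_mset n (RVar y))))"
    using lsv_other[OF Suc.prems] Suc.IH[OF Suc.prems] by (rule lss_cons)
  then show ?case by simp
qed


lemma lsubs_app_inv: "lsubs x B (SApp t1 t2) s \<Longrightarrow>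
  \<exists>B1 B2 s1 s2. B = B1 + B2 \<and> lsubs x B1 t1 s1 \<and> lsubs x B2 t2 s2 \<and> s = SApp s1 s2"
  by (erule lsubs.cases) auto

lemma lsubv_abs_inv: "lsubv x B (RAbs t) v' \<Longrightarrow>
  \<exists>t'. v' = RAbs t' \<and> lsubs (Suc x) (image_mset (rlift 0) B) t t'"
  by (erule lsubv.cases) auto

lemma sub1: "is_value V \<Longrightarrow> s \<in> taylor (lsubst M x V) \<Longrightarrow>
  \<exists>t\<in>taylor M. \<exists>B. Bag B \<in> taylor V \<and> lsubs x B t s"
proof (induction M arbitrary: x V s)
  case (LVar y)
  show ?case
  proof (cases "y = x")
    case True
    then have "s \<in> taylor V" using LVar by simp
    then obtain B where B: "s = Bag B" using taylor_value_bag LVar by blast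
    have "Bag (replicate_mset (size B) (RVar x)) \<in> taylor (LVar y)" using True by auto
    then show ?thesis using lsubs_rep_hit B \<open>s \<in> taylor V\<close> by blast
  next
    case False
    then obtain n where n: "s = Bag (replicate_mset n (RVar y))" using LVar by auto
    then have "s \<in> taylor (LVar y)" by auto
    then show ?thesis using n lsubs_rep_other[OF False] taylor_value_empty[OF LVar(1)] by blast
  qed
next
  case (LAbs N)
  let ?K = "lsubst N (Suc x) (llift 0 V)"
  from LAbs.prems obtain ts' where s: "s = Bag (mset (map RAbs ts'))" "set ts' \<subseteq> taylor ?K"
    by auto
  have el: "\<exists>t\<in>taylor N. \<exists>B. Bag B \<in> taylor V \<and> lsubs (Suc x) (image_mset (rlift 0) B) t t'"
    if "t' \<in> set ts'" for t'
  proof -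
    from LAbs.IH[OF value_llift[OF LAbs.prems(1)]] that s(2)
    obtain t B' where "t \<in> taylor N" "Bag B' \<in> taylor (llift 0 V)" "lsubs (Suc x) B' t t'"
      by blast
    moreover obtain B where "B' = image_mset (rlift 0) B" "Bag B \<in> taylor V"
      using bag_llift_iff \<open>Bag B' \<in> taylor (llift 0 V)\<close> by blast
    ultimately show ?thesis by blast
  qed
  have "\<exists>ts B. set ts \<subseteq> taylor N \<and> Bag B \<in> taylor V \<and>
     lsubs x B (Bag (mset (map RAbs ts))) (Bag (mset (map RAbs ts')))"
    using el
  proof (induction ts')
    case Nil
    then show ?case using taylor_value_empty[OF LAbs.prems(1)] lss_nil
      by (intro exI[of _ "[]"]) auto
  next
    case (Cons t' ts')
    then obtain ts B where h: "set ts \<subseteq> taylor N" "Bag B \<in> taylor V"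
      "lsubs x B (Bag (mset (map RAbs ts))) (Bag (mset (map RAbs ts')))" by auto
    from Cons.prems obtain t0 B0 where h0: "t0 \<in> taylor N" "Bag B0 \<in> taylor V"
      "lsubs (Suc x) (image_mset (rlift 0) B0) t0 t'" by (meson list.set_intros(1))
    have "lsubv x B0 (RAbs t0) (RAbs t')" using h0(3) by (rule lsv_abs)
    from lss_cons[OF this h(3)]
    have "lsubs x (B0 + B) (Bag (mset (map RAbs (t0 # ts)))) (Bag (mset (map RAbs (t' # ts'))))"
      by simp
    moreover have "Bag (B0 + B) \<in> taylor V"
      using taylor_value_plus[OF LAbs.prems(1)] h h0 by blast
    moreover have "set (t0 # ts) \<subseteq> taylor N" using h h0 by auto
    ultimately show ?case by blast
  qed
  then obtain ts B where "set ts \<subseteq> taylor N" "Bag B \<in> taylor V"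
     "lsubs x B (Bag (mset (map RAbs ts))) s" using s by blast
  moreover have "Bag (mset (map RAbs ts)) \<in> taylor (LAbs N)" using calculation by auto
  ultimately show ?case by blast
next
  case (LApp P Q)
  from LApp.prems obtain s1 s2 where s: "s = SApp s1 s2" "s1 \<in> taylor (lsubst P x V)"
    "s2 \<in> taylor (lsubst Q x V)" by auto
  obtain t1 B1 where 1: "t1 \<in> taylor P" "Bag B1 \<in> taylor V" "lsubs x B1 t1 s1"
    using LApp.IH(1)[OF LApp.prems(1) s(2)] by blast
  obtain t2 B2 where 2: "t2 \<in> taylor Q" "Bag B2 \<in> taylor V" "lsubs x B2 t2 s2"
    using LApp.IH(2)[OF LApp.prems(1) s(3)] by blast
  have "lsubs x (B1 + B2) (SApp t1 t2) s" using lss_app[OF 1(3) 2(3)] s by simp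
  moreover have "Bag (B1 + B2) \<in> taylor V" using taylor_value_plus[OF LApp.prems(1)] 1 2 by blast
  moreover have "SApp t1 t2 \<in> taylor (LApp P Q)" using 1 2 by auto
  ultimately show ?case by blast
qed

lemma sub2: "is_value V \<Longrightarrow> t \<in> taylor M \<Longrightarrow> Bag B \<in> taylor V \<Longrightarrow> lsubs x B t s \<Longrightarrow>
  s \<in> taylor (lsubst M x V)"
proof (induction M arbitrary: x V B t s)
  case (LVar y)
  then obtain n where t: "t = Bag (replicate_mset n (RVar y))" by auto
  from lsubs_rep_inv[of x B n y s] LVar.prems(4) t show ?case
    using LVar.prems by (auto split: if_splits)
next
  case (LAbs N)
  let ?K = "lsubst N (Suc x) (llift 0 V)"
  from LAbs.prems obtain ts where t: "t = Bag (mset (map RAbs ts))" "set ts \<subseteq> taylor N"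
    by auto
  have "s \<in> taylor (LAbs ?K)" using t(2) LAbs.prems(3,4) unfolding t(1)
  proof (induction ts arbitrary: B s)
    case Nil
    then show ?case using lsubs_nil_inv by (auto intro: exI[of _ "[]"])
  next
    case (Cons t0 ts)
    from lsubs_cons_inv[of x B "RAbs t0" "mset (map RAbs ts)" s] Cons.prems(3)
    obtain B1 B2 v' ws where b: "B = B1 + B2" "lsubv x B1 (RAbs t0) v'"
      "lsubs x B2 (Bag (mset (map RAbs ts))) (Bag ws)" "s = Bag (add_mset v' ws)" by auto
    from lsubv_abs_inv[OF b(2)] obtain t0' where t0': "v' = RAbs t0'"
      "lsubs (Suc x) (image_mset (rlift 0) B1) t0 t0'" by blast
    have P: "Bag B1 \<in> taylor V" "Bag B2 \<in> taylor V"
      using taylor_value_plus[OF LAbs.prems(1)] Cons.prems(2) b(1) by auto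
    have "Bag ws \<in> taylor (LAbs ?K)" using Cons.IH[OF _ P(2) b(3)] Cons.prems(1) by auto
    then obtain ts'' where ws: "ws = mset (map RAbs ts'')" "set ts'' \<subseteq> taylor ?K" by auto
    have "Bag (image_mset (rlift 0) B1) \<in> taylor (llift 0 V)" using P(1) bag_llift_iff by blast
    from LAbs.IH[OF value_llift[OF LAbs.prems(1)] _ this t0'(2)] Cons.prems(1)
    have "t0' \<in> taylor ?K" by auto
    then have "set (t0' # ts'') \<subseteq> taylor ?K" using ws by auto
    moreover have "s = Bag (mset (map RAbs (t0' # ts'')))" using b(4) t0' ws by simp
    ultimately show ?case by (simp only: taylor.simps) blast
  qed
  then show ?case by simp
next
  case (LApp P Q)
  from LApp.prems obtain t1 t2 where t: "t = SApp t1 t2" "t1 \<in> taylor P" "t2 \<in> taylor Q" by auto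
  from lsubs_app_inv[of x B t1 t2 s] LApp.prems(4) t(1)
  obtain B1 B2 s1 s2 where b: "B = B1 + B2" "lsubs x B1 t1 s1" "lsubs x B2 t2 s2" "s = SApp s1 s2"
    by auto
  have P: "Bag B1 \<in> taylor V" "Bag B2 \<in> taylor V"
    using taylor_value_plus[OF LApp.prems(1)] LApp.prems(3) b(1) by auto
  have "s1 \<in> taylor (lsubst P x V)" using LApp.IH(1)[OF LApp.prems(1) t(2) P(1) b(2)] .
  moreover have "s2 \<in> taylor (lsubst Q x V)" using LApp.IH(2)[OF LApp.prems(1) t(3) P(2) b(3)] .
  ultimately show ?case using b(4) by auto
qed

theorem lemma4p3:
  fixes M V :: lterm and x :: nat
  assumes "is_value V"
  shows "taylor (lsubst M x V) = (\<Union>t\<in>taylor M. \<Union>B\<in>{B. Bag B \<in> taylor V}. linsubst t x B)"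
proof (rule set_eqI)
  fix s
  show "s \<in> taylor (lsubst M x V) \<longleftrightarrow> s \<in> (\<Union>t\<in>taylor M. \<Union>B\<in>{B. Bag B \<in> taylor V}. linsubst t x B)"
  proof
    assume "s \<in> taylor (lsubst M x V)"
    from sub1[OF assms this] obtain t B where "t \<in> taylor M" "Bag B \<in> taylor V" "lsubs x B t s"
      by blast
    then show "s \<in> (\<Union>t\<in>taylor M. \<Union>B\<in>{B. Bag B \<in> taylor V}. linsubst t x B)"
      unfolding linsubst_def by blast
  next
    assume "s \<in> (\<Union>t\<in>taylor M. \<Union>B\<in>{B. Bag B \<in> taylor V}. linsubst t x B)"
    then obtain t B where "t \<in> taylor M" "Bag B \<in> taylor V" "lsubs x B t s"
      unfolding linsubst_def by blast
    then show "s \<in> taylor (lsubst M x V)" using sub2[OF assms] by blast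
  qed
qed

end
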